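(* Let $\alpha\in\mathbb{N}$, let $m$ be a positive odd integer with $m>4\alpha+2$, and let $\mathbb{S}=\langle 4,4\alpha+2,m\rangle$, with Betti elements $\beta_1=\beta_2=8\alpha+4$ and $\beta_3=2m$. Then the factorizations of $\beta_1=\beta_2$ (with respect to $(4,4\alpha+2,m)$) are exactly $(2\alpha+1,0,0)$ and $(0,2,0)$, and the factorizations of $\beta_3$ are exactly $(0,0,2)$ and the tuples $\left(\frac{m-k(2\alpha+1)}{2},k,0\right)$ where $k$ ranges over positive odd integers with $k\le\frac{m}{2\alpha+1}$.
   Context: $\mathbb{N}=\{0,1,2,\dots\}$. For a numerical semigroup $\mathbb{S}=\langle a_1,a_2,a_3\rangle$ (the set of $\mathbb{N}$-linear combinations of $a_1,a_2,a_3$) and $a\in\mathbb{S}$, a factorization of $a$ is a tuple $(\eta_1,\eta_2,\eta_3)\in\mathbb{N}^3$ with $\eta_1a_1+\eta_2a_2+\eta_3a_3=a$. *)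

theory Defs
  imports Complex_Main
begin

definition factorizations :: "nat \<Rightarrow> nat \<Rightarrow> nat \<Rightarrow> nat \<Rightarrow> (nat \<times> nat \<times> nat) set" where
  "factorizations a1 a2 a3 a = {(e1, e2, e3). e1 * a1 + e2 * a2 + e3 * a3 = a}"

end

theory Submission
  imports Defs
begin

lemma part1:
  fixes \<alpha> m a b c :: nat
  assumes "odd m" and "m > 4 * \<alpha> + 2"
    and e: "a * 4 + b * (4 * \<alpha> + 2) + c * m = 8 * \<alpha> + 4"
  shows "(a, b, c) = (2 * \<alpha> + 1, 0, 0) \<or> (a, b, c) = (0, 2, 0)"
proof -
  have c01: "c \<le> 1"
  proof (rule ccontr)
    assume "\<not> c \<le> 1"
    then have "c * m \<ge> 2 * m" by simp
    then show False using e assms(2) by linarith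
  qed
  have c0: "c = 0"
  proof (rule ccontr)
    assume "c \<noteq> 0"
    with c01 have "c = 1" by simp
    with e have "m = 8 * \<alpha> + 4 - a * 4 - b * (4 * \<alpha> + 2)" by simp
    moreover have "even (8 * \<alpha> + 4 - a * 4 - b * (4 * \<alpha> + 2))" by simp
    ultimately show False using assms(1) by simp
  qed
  have b2: "b \<le> 2"
  proof (rule ccontr)
    assume "\<not> b \<le> 2"
    then have "b * (4 * \<alpha> + 2) \<ge> 3 * (4 * \<alpha> + 2)" by (intro mult_right_mono) auto
    moreover define X where "X = b * (4 * \<alpha> + 2)"
    ultimately have "X \<ge> 12 * \<alpha> + 6" "X \<le> 8 * \<alpha> + 4" using e by auto
    then show False by linarith
  qed
  then consider "b = 0" | "b = 1" | "b = 2" by linarith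
  then show ?thesis
  proof cases
    case 1 then show ?thesis using e c0 by simp
  next
    case 2 then have "a * 4 = 4 * \<alpha> + 2" using e c0 by simp
    then have False by presburger
    then show ?thesis by simp
  next
    case 3 then show ?thesis using e c0 by simp
  qed
qed

lemma part2:
  fixes \<alpha> m a b c :: nat
  assumes "odd m" and "m > 4 * \<alpha> + 2"
    and e: "a * 4 + b * (4 * \<alpha> + 2) + c * m = 2 * m"
  shows "(a, b, c) = (0, 0, 2) \<or> (c = 0 \<and> b > 0 \<and> odd b \<and> b * (2 * \<alpha> + 1) \<le> m
          \<and> a = (m - b * (2 * \<alpha> + 1)) div 2)"
proof -
  have c2: "c \<le> 2"
  proof (rule ccontr)
    assume "\<not> c \<le> 2"
    then have "c * m \<ge> 3 * m" by simp
    then show False using e assms(2) by linarith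
  qed
  have c1: "c \<noteq> 1"
  proof
    assume "c = 1"
    with e have "m = a * 4 + b * (4 * \<alpha> + 2)" by simp
    moreover have "even (a * 4 + b * (4 * \<alpha> + 2))" by simp
    ultimately show False using assms(1) by simp
  qed
  consider "c = 0" | "c = 2" using c1 c2 by linarith
  then show ?thesis
  proof cases
    case 2
    then have "a * 4 + b * (4 * \<alpha> + 2) = 0" using e by simp
    then show ?thesis using 2 by simp
  next
    case 1
    have h: "b * (4 * \<alpha> + 2) = 2 * (b * (2 * \<alpha> + 1))" by (simp add: algebra_simps)
    with e 1 have m: "m = 2 * a + b * (2 * \<alpha> + 1)" by simp
    have "odd b" using m assms(1) by auto
    then have "b > 0" by (cases b) auto
    show ?thesis using m \<open>odd b\<close> \<open>b > 0\<close> 1 by simp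
  qed
qed

lemma real_le_iff: "(real k \<le> real m / real (2 * \<alpha> + 1)) = (k * (2 * \<alpha> + 1) \<le> m)"
proof -
  have "(real k \<le> real m / real (2 * \<alpha> + 1)) = (real k * real (2 * \<alpha> + 1) \<le> real m)"
    by (simp add: pos_le_divide_eq)
  also have "\<dots> = (k * (2 * \<alpha> + 1) \<le> m)" by (metis of_nat_le_iff of_nat_mult)
  finally show ?thesis .
qed

theorem theorem5:
  fixes \<alpha> m :: nat
  assumes "m > 0" and "odd m" and "m > 4 * \<alpha> + 2"
  shows "factorizations 4 (4 * \<alpha> + 2) m (8 * \<alpha> + 4) = {(2 * \<alpha> + 1, 0, 0), (0, 2, 0)}
     \<and> factorizations 4 (4 * \<alpha> + 2) m (2 * m) =
         {(0, 0, 2)} \<union>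
         {((m - k * (2 * \<alpha> + 1)) div 2, k, 0) | k :: nat.
             k > 0 \<and> odd k \<and> real k \<le> real m / real (2 * \<alpha> + 1)}"
proof
  show "factorizations 4 (4 * \<alpha> + 2) m (8 * \<alpha> + 4) = {(2 * \<alpha> + 1, 0, 0), (0, 2, 0)}"
    using part1[OF assms(2,3)] by (auto simp: factorizations_def algebra_simps)
next
  show "factorizations 4 (4 * \<alpha> + 2) m (2 * m) =
         {(0, 0, 2)} \<union>
         {((m - k * (2 * \<alpha> + 1)) div 2, k, 0) | k :: nat.
             k > 0 \<and> odd k \<and> real k \<le> real m / real (2 * \<alpha> + 1)}"
  proof (rule set_eqI, clarify)
    fix a b c
    show "((a, b, c) \<in> factorizations 4 (4 * \<alpha> + 2) m (2 * m)) =
      ((a, b, c) \<in> {(0, 0, 2)} \<union> {((m - k * (2 * \<alpha> + 1)) div 2, k, 0) | k :: nat.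
             k > 0 \<and> odd k \<and> real k \<le> real m / real (2 * \<alpha> + 1)})"
    proof
      assume "(a, b, c) \<in> factorizations 4 (4 * \<alpha> + 2) m (2 * m)"
      then have "a * 4 + b * (4 * \<alpha> + 2) + c * m = 2 * m" by (simp add: factorizations_def)
      from part2[OF assms(2,3) this] show "(a, b, c) \<in> {(0, 0, 2)} \<union> {((m - k * (2 * \<alpha> + 1)) div 2, k, 0) | k :: nat.
             k > 0 \<and> odd k \<and> real k \<le> real m / real (2 * \<alpha> + 1)}"
      proof
        assume "(a, b, c) = (0, 0, 2)" then show ?thesis by simp
      next
        assume h: "c = 0 \<and> b > 0 \<and> odd b \<and> b * (2 * \<alpha> + 1) \<le> m
          \<and> a = (m - b * (2 * \<alpha> + 1)) div 2"
        then have "real b \<le> real m / real (2 * \<alpha> + 1)" using real_le_iff[of b m \<alpha>] by blast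
        with h show ?thesis by blast
      qed
    next
      assume "(a, b, c) \<in> {(0, 0, 2)} \<union> {((m - k * (2 * \<alpha> + 1)) div 2, k, 0) | k :: nat.
             k > 0 \<and> odd k \<and> real k \<le> real m / real (2 * \<alpha> + 1)}"
      then have "(a, b, c) = (0, 0, 2) \<or> (\<exists>k. (a, b, c) = ((m - k * (2 * \<alpha> + 1)) div 2, k, 0) \<and>
          k > 0 \<and> odd k \<and> real k \<le> real m / real (2 * \<alpha> + 1))" by blast
      then consider (A) "(a, b, c) = (0, 0, 2)"
        | (B) "c = 0" "odd b" "b * (2 * \<alpha> + 1) \<le> m" "a = (m - b * (2 * \<alpha> + 1)) div 2"
        using real_le_iff by auto
      then show "(a, b, c) \<in> factorizations 4 (4 * \<alpha> + 2) m (2 * m)"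
      proof cases
        case A then show ?thesis by (simp add: factorizations_def)
      next
        case B
        have "odd (b * (2 * \<alpha> + 1))" using B by simp
        then have ev: "even (m - b * (2 * \<alpha> + 1))" using assms(2) B by auto
        have "2 * a = m - b * (2 * \<alpha> + 1)" using B ev by simp
        then have "a * 4 + b * (4 * \<alpha> + 2) = 2 * m" using B by (simp add: algebra_simps)
        then show ?thesis using B by (simp add: factorizations_def)
      qed
    qed
  qed
qed

end
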